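(* Let $m\in[0,1]$, $n=\sqrt{1-m^2}$, and for $k\in[-\pi,\pi]$ define $\omega(k,m)=\arccos(n\cos k)\in[0,\pi]$, $\omega_{\rm D}=\sqrt{k^2+m^2}$, $v=\partial_k\omega=\frac{n\sin k}{\sin\omega}$, $v_{\rm D}=\frac{k}{\sqrt{k^2+m^2}}$, and $$\alpha(k,m):=\omega_{\rm D}-\omega,\qquad \beta(k,m):=\tfrac12\Big(1-v\,v_{\rm D}-\sqrt{(1-v^2)(1-v_{\rm D}^2)}\Big).$$ Let $0\le\bar k<\pi$. Then for every $m\in[0,1]$, $$\max_{k\in[-\bar k,\bar k]}|\alpha(k,m)|=\max_{k\in\{0,\bar k\}}|\alpha(k,m)|,\qquad \max_{k\in[-\bar k,\bar k]}|\beta(k,m)|=\max_{k\in\{0,\bar k\}}|\beta(k,m)|.$$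
   Context: $\omega$ is the dispersion relation of the one-dimensional Dirac quantum cellular automaton with mass parameter $m$, $\omega_{\rm D}$ the Dirac dispersion relation (Planck units), and $v$, $v_{\rm D}$ the corresponding group velocities. *)

theory Defs
  imports Complex_Main
begin

definition qca_n :: "real \<Rightarrow> real" where
  "qca_n m = sqrt (1 - m\<^sup>2)"

definition qca_omega :: "real \<Rightarrow> real \<Rightarrow> real" where
  "qca_omega k m = arccos (qca_n m * cos k)"

definition dirac_omega :: "real \<Rightarrow> real \<Rightarrow> real" where
  "dirac_omega k m = sqrt (k\<^sup>2 + m\<^sup>2)"

definition qca_v :: "real \<Rightarrow> real \<Rightarrow> real" where
  "qca_v k m = qca_n m * sin k / sin (qca_omega k m)"

definition dirac_v :: "real \<Rightarrow> real \<Rightarrow> real" where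
  "dirac_v k m = k / sqrt (k\<^sup>2 + m\<^sup>2)"

definition alpha :: "real \<Rightarrow> real \<Rightarrow> real" where
  "alpha k m = dirac_omega k m - qca_omega k m"

definition beta :: "real \<Rightarrow> real \<Rightarrow> real" where
  "beta k m = (1 - qca_v k m * dirac_v k m
      - sqrt ((1 - (qca_v k m)\<^sup>2) * (1 - (dirac_v k m)\<^sup>2))) / 2"

end

theory Submission
  imports Defs
begin


lemma cos_ge_quad: "0 \<le> x \<Longrightarrow> 1 - x^2/2 \<le> cos (x::real)"
proof -
  assume x: "0 \<le> x"
  have "(\<lambda>t. cos t - 1 + t^2/2) 0 \<le> (\<lambda>t. cos t - 1 + t^2/2) x"
  proof (rule DERIV_nonneg_imp_nondecreasing[OF x])
    fix t :: real assume "0 \<le> t" "t \<le> x"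
    show "\<exists>y. ((\<lambda>t. cos t - 1 + t^2/2) has_real_derivative y) (at t) \<and> 0 \<le> y"
      by (rule exI[of _ "- sin t + t"], auto intro!: derivative_eq_intros simp: sin_x_le_x \<open>0 \<le> t\<close>)
  qed
  then show ?thesis by simp
qed

lemma sin_ge_cubic: "0 \<le> x \<Longrightarrow> x - x^3/6 \<le> sin (x::real)"
proof -
  assume x: "0 \<le> x"
  have "(\<lambda>t. sin t - t + t^3/6) 0 \<le> (\<lambda>t. sin t - t + t^3/6) x"
  proof (rule DERIV_nonneg_imp_nondecreasing[OF x])
    fix t :: real assume "0 \<le> t" "t \<le> x"
    show "\<exists>y. ((\<lambda>t. sin t - t + t^3/6) has_real_derivative y) (at t) \<and> 0 \<le> y"
      by (rule exI[of _ "cos t - 1 + t^2/2"], auto intro!: derivative_eq_intros; insert cos_ge_quad[OF \<open>0 \<le> t\<close>]; simp)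
  qed
  then show ?thesis by simp
qed

lemma cos_le_quart: "0 \<le> x \<Longrightarrow> cos (x::real) \<le> 1 - x^2/2 + x^4/24"
proof -
  assume x: "0 \<le> x"
  have "(\<lambda>t. 1 - t^2/2 + t^4/24 - cos t) 0 \<le> (\<lambda>t. 1 - t^2/2 + t^4/24 - cos t) x"
  proof (rule DERIV_nonneg_imp_nondecreasing[OF x])
    fix t :: real assume "0 \<le> t" "t \<le> x"
    show "\<exists>y. ((\<lambda>t. 1 - t^2/2 + t^4/24 - cos t) has_real_derivative y) (at t) \<and> 0 \<le> y"
      by (rule exI[of _ "sin t - t + t^3/6"], auto intro!: derivative_eq_intros; insert sin_ge_cubic[OF \<open>0 \<le> t\<close>]; simp)
  qed
  then show ?thesis by simp
qed

lemma sin_sq_ge: "0 \<le> (x::real) \<Longrightarrow> x \<le> 2 \<Longrightarrow> x^2 * cos x \<le> (sin x)^2"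
proof -
  assume x: "0 \<le> x" "x \<le> 2"
  have s: "x - x^3/6 \<le> sin x" by (rule sin_ge_cubic[OF x(1)])
  have x2: "x^2 \<le> 4" using x power_mono[of x 2 2] by simp
  have p: "0 \<le> x - x^3/6"
  proof -
    have "x - x^3/6 = x * (1 - x^2/6)" by (simp add: algebra_simps power2_eq_square power3_eq_cube)
    moreover have "0 \<le> x * (1 - x^2/6)" using x x2 by simp
    ultimately show ?thesis by simp
  qed
  have "(x - x^3/6)^2 \<le> (sin x)^2" using s p by (simp add: power_mono)
  moreover have "x^2 * cos x \<le> x^2 * (1 - x^2/2 + x^4/24)"
    using cos_le_quart[OF x(1)] by (simp add: mult_left_mono)
  moreover have "x^2 * (1 - x^2/2 + x^4/24) \<le> (x - x^3/6)^2"
  proof -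
    have "(x - x^3/6)^2 - x^2 * (1 - x^2/2 + x^4/24) = x^4 * (12 - x^2) / 72"
      by (simp add: algebra_simps power2_eq_square power3_eq_cube power4_eq_xxxx)
    moreover have "0 \<le> x^4 * (12 - x^2) / 72" using x2 by simp
    ultimately show ?thesis by linarith
  qed
  ultimately show ?thesis by linarith
qed


lemma cos_pos_imp_small: "0 \<le> k \<Longrightarrow> k \<le> pi \<Longrightarrow> 0 < cos (k::real) \<Longrightarrow> k < pi/2"
proof (rule ccontr)
  assume "0 \<le> k" "k \<le> pi" "0 < cos k" "\<not> k < pi/2"
  then have "0 \<le> cos (pi - k)" by (intro cos_ge_zero) auto
  then show False using \<open>0 < cos k\<close> by (simp add: cos_diff)
qed

lemma P_nonneg:
  fixes k n :: real
  assumes "0 \<le> k" "k < pi" "0 \<le> n" "n \<le> 1"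
  shows "0 \<le> 1 - n^2 * (cos k)^2 - n * cos k * (1 - n^2 + k^2)"
proof (cases "cos k \<le> 0")
  case True
  have "n^2 \<le> 1" using assms power_mono[of n 1 2] by simp
  moreover have "(cos k)^2 \<le> 1" using abs_cos_le_one[of k] by (simp add: abs_square_le_1)
  ultimately have "n^2 * (cos k)^2 \<le> 1" using mult_mono[of "n^2" 1 "(cos k)^2" 1] by simp
  moreover have "n * cos k \<le> 0" using True assms by (simp add: mult_nonneg_nonpos)
  moreover have "0 \<le> 1 - n^2 + k^2" using \<open>n^2 \<le> 1\<close> by (simp add: add_nonneg_nonneg)
  ultimately show ?thesis using mult_nonpos_nonneg[of "n * cos k" "1 - n^2 + k^2"] by linarith
next
  case False
  define c where "c = cos k"
  have cpos: "0 < c" using False c_def by simp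
  have ksmall: "k \<le> 2" using cos_pos_imp_small[of k] assms cpos c_def pi_half_less_two by force
  have P1: "0 \<le> 1 - c^2 - c * k^2"
    using sin_sq_ge[OF assms(1) ksmall] sin_squared_eq[of k] c_def by (simp add: algebra_simps)
  have cge: "1 - k^2/2 \<le> c" using cos_ge_quad[OF assms(1)] c_def by simp
  have "c * (1 + n) \<ge> (1 - k^2/2) * (1 + n)" using cge assms by (intro mult_right_mono) auto
  moreover have "(1 - k^2/2) * (1 + n) - n - n^2 + k^2 = k^2 * (1 - n) / 2 + (1 - n) * (1 + n)"
    by (simp add: field_simps power2_eq_square)
  moreover have "0 \<le> k^2 * (1 - n) / 2 + (1 - n) * (1 + n)" using assms by simp
  ultimately have Q: "0 \<le> k^2 + c * (1 + n) - n - n^2" by linarith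
  have "1 - n^2 * c^2 - n * c * (1 - n^2 + k^2) = (1 - c^2 - c * k^2) + (1 - n) * c * (k^2 + c * (1 + n) - n - n^2)"
    by (simp add: algebra_simps power2_eq_square power3_eq_cube)
  moreover have "0 \<le> (1 - n) * c * (k^2 + c * (1 + n) - n - n^2)" using Q cpos assms by simp
  ultimately show ?thesis using P1 c_def by simp
qed


lemma n_facts: "0 \<le> m \<Longrightarrow> m \<le> 1 \<Longrightarrow> 0 \<le> qca_n m \<and> qca_n m \<le> 1 \<and> (qca_n m)^2 = 1 - m^2"
  unfolding qca_n_def
proof -
  assume "0 \<le> m" "m \<le> 1"
  then have "m^2 \<le> 1" using power_mono[of m 1 2] by simp
  then show "0 \<le> sqrt (1 - m\<^sup>2) \<and> sqrt (1 - m\<^sup>2) \<le> 1 \<and> (sqrt (1 - m\<^sup>2))\<^sup>2 = 1 - m\<^sup>2"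
    using \<open>0 \<le> m\<close> by simp
qed

lemma ncos_bounds: "0 \<le> n \<Longrightarrow> n \<le> (1::real) \<Longrightarrow> \<bar>n * cos x\<bar> \<le> 1"
proof -
  assume "0 \<le> n" "n \<le> 1"
  then have "\<bar>n\<bar> * \<bar>cos x\<bar> \<le> 1 * 1" by (intro mult_mono) auto
  then show ?thesis by (simp add: abs_mult)
qed

lemma ncos_strict: "0 \<le> n \<Longrightarrow> n \<le> (1::real) \<Longrightarrow> 0 < x \<Longrightarrow> x < pi \<Longrightarrow> (n * cos x)^2 < 1"
proof -
  assume h: "0 \<le> n" "n \<le> 1" "0 < x" "x < pi"
  have "0 < sin x" using h by (intro sin_gt_zero) auto
  then have "0 < (sin x)^2" by simp
  moreover have "(cos x)^2 = 1 - (sin x)^2" by (simp add: cos_squared_eq)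
  ultimately have "(cos x)^2 < 1" by linarith
  have "n^2 \<le> 1" using h power_mono[of n 1 2] by simp
  have "(n * cos x)^2 = n^2 * (cos x)^2" by (simp add: power_mult_distrib)
  also have "\<dots> \<le> 1 * (cos x)^2" using \<open>n^2 \<le> 1\<close> by (intro mult_right_mono) auto
  finally show ?thesis using \<open>(cos x)^2 < 1\<close> by simp
qed

lemma alpha_mono:
  fixes a b m :: real
  assumes m: "0 \<le> m" "m \<le> 1" and ab: "0 \<le> a" "a \<le> b" "b < pi"
  shows "alpha a m \<le> alpha b m"
proof -
  define n where "n = qca_n m"
  have nf: "0 \<le> n" "n \<le> 1" "n^2 = 1 - m^2" using n_facts[OF m] n_def by auto
  define f where "f = (\<lambda>k. sqrt (k^2+m^2) - arccos (n * cos k))"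
  have fa: "\<And>k. alpha k m = f k" unfolding f_def alpha_def dirac_omega_def qca_omega_def n_def by simp
  have "f a \<le> f b"
  proof (rule DERIV_nonneg_imp_increasing_open[OF ab(2)])
    have nb1: "\<And>x. -1 \<le> n * cos x" and nb2: "\<And>x. n * cos x \<le> 1"
      using ncos_bounds[OF nf(1,2)] by (simp_all add: abs_le_iff)
    show "continuous_on {a..b} f" unfolding f_def
      by (intro continuous_intros) (use nb1 nb2 in blast)
  next
    fix x assume x: "a < x" "x < b"
    then have x0: "0 < x" "x < pi" using ab by auto
    have sq: "(n * cos x)^2 < 1" by (rule ncos_strict[OF nf(1,2) x0])
    then have "\<bar>n * cos x\<bar> < 1" by (simp only: abs_square_less_1)
    then have lt: "-1 < n * cos x" "n * cos x < 1" by linarith+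
    define S where "S = sqrt (1 - (n * cos x)^2)"
    define R where "R = sqrt (x^2 + m^2)"
    have Sp: "0 < S" using sq S_def by simp
    have Rp: "0 < R" using x0 R_def by (simp add: add_pos_nonneg)
    have sinp: "0 \<le> sin x" using x0 by (intro sin_ge_zero) auto
    have S2: "S^2 = 1 - (n * cos x)^2" using sq S_def by simp
    have R2: "R^2 = x^2 + m^2" using R_def by simp
    have "(n * sin x * R)^2 \<le> (x * S)^2"
    proof -
      have "(x * S)^2 - (n * sin x * R)^2 = m^2 * (x^2 - n^2 * (sin x)^2)"
        unfolding power_mult_distrib S2 R2 using nf(3) sin_cos_squared_add[of x]
        by algebra
      moreover have "n^2 * (sin x)^2 \<le> 1 * x^2"
      proof (rule mult_mono)
        show "n^2 \<le> 1" using nf power_mono[of n 1 2] by simp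
        show "(sin x)^2 \<le> x^2" using sin_x_le_x[of x] sinp x0 power_mono[of "sin x" x 2] by simp
      qed auto
      then have "0 \<le> m^2 * (x^2 - n^2 * (sin x)^2)" by (intro mult_nonneg_nonneg) auto
      ultimately show ?thesis by linarith
    qed
    then have le: "n * sin x * R \<le> x * S"
    proof (rule power2_le_imp_le)
      show "0 \<le> x * S" using Sp x0 by simp
    qed
    have "n * sin x / S = (n * sin x * R) / (S * R)" using Rp by (simp only: mult_divide_mult_cancel_right)
    also have "\<dots> \<le> (x * S) / (S * R)" using le Sp Rp by (intro divide_right_mono) auto
    also have "\<dots> = x / R" using Sp by (simp only: mult.commute[of S R] mult_divide_mult_cancel_right)
    finally have "n * sin x / S \<le> x / R" .
    then have y0: "0 \<le> inverse R * x - inverse S * (sin x * n)"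
      by (simp add: divide_inverse mult.commute mult.left_commute)
    have "(f has_real_derivative (inverse R * x - inverse S * (sin x * n))) (at x)"
      unfolding f_def S_def R_def using lt x0
      apply (auto intro!: derivative_eq_intros)
      by (metis add_nonneg_nonneg not_less zero_le_power2)
    then show "\<exists>y. (f has_real_derivative y) (at x) \<and> 0 \<le> y" using y0 by blast
  qed
  then show ?thesis using fa by simp
qed


lemma one_minus_frac: "0 < (D::real) \<Longrightarrow> D = a + b \<Longrightarrow> 1 - a / D = b / D"
  by (simp add: field_simps)

lemma h_mono:
  fixes a b m n :: real
  assumes m: "0 < m" and nf: "0 \<le> n" "n \<le> 1" "n^2 = 1 - m^2" and ab: "0 \<le> a" "a \<le> b" "b < pi"
  shows "m * (a - n * sin a) / (m^2 + n * a * sin a) \<le> m * (b - n * sin b) / (m^2 + n * b * sin b)"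
proof (rule DERIV_nonneg_imp_nondecreasing[OF ab(2)])
  fix x assume x: "a \<le> x" "x \<le> b"
  then have x0: "0 \<le> x" "x < pi" using ab by auto
  have s0: "0 \<le> sin x" using x0 by (intro sin_ge_zero) auto
  have A0: "0 < m^2 + n * x * sin x" using m nf x0 s0 by (simp add: add_pos_nonneg)
  have dB: "((\<lambda>k. m * (k - n * sin k)) has_real_derivative m * (1 - n * cos x)) (at x)"
    by (auto intro!: derivative_eq_intros)
  have dA: "((\<lambda>k. m^2 + n * k * sin k) has_real_derivative n * (sin x + x * cos x)) (at x)"
    by (auto intro!: derivative_eq_intros simp: algebra_simps)
  have D: "((\<lambda>k. m * (k - n * sin k) / (m^2 + n * k * sin k)) has_real_derivative
     (m * (1 - n * cos x) * (m^2 + n * x * sin x) - m * (x - n * sin x) * (n * (sin x + x * cos x)))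
       / ((m^2 + n * x * sin x) * (m^2 + n * x * sin x))) (at x)"
    using DERIV_divide[OF dB dA] A0 by simp
  have num: "m * (1 - n * cos x) * (m^2 + n * x * sin x) - m * (x - n * sin x) * (n * (sin x + x * cos x))
     = m * (1 - n^2 * (cos x)^2 - n * cos x * (1 - n^2 + x^2))"
    using nf(3) sin_cos_squared_add[of x] by algebra
  have "0 \<le> m * (1 - n^2 * (cos x)^2 - n * cos x * (1 - n^2 + x^2))"
    using P_nonneg[OF x0 nf(1,2)] m by simp
  then have "0 \<le> (m * (1 - n * cos x) * (m^2 + n * x * sin x) - m * (x - n * sin x) * (n * (sin x + x * cos x)))
       / ((m^2 + n * x * sin x) * (m^2 + n * x * sin x))"
    unfolding num by simp
  then show "\<exists>y. ((\<lambda>k. m * (k - n * sin k) / (m^2 + n * k * sin k)) has_real_derivative y) (at x) \<and> 0 \<le> y"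
    using D by blast
qed

lemma h_nonneg:
  fixes k m n :: real
  assumes m: "0 < m" and nf: "0 \<le> n" "n \<le> 1" and k: "0 \<le> k" "k < pi"
  shows "0 \<le> m * (k - n * sin k) / (m^2 + n * k * sin k)"
proof -
  have s0: "0 \<le> sin k" using k by (intro sin_ge_zero) auto
  have "n * sin k \<le> 1 * sin k" using nf s0 by (intro mult_right_mono) auto
  then have "n * sin k \<le> k" using sin_x_le_x[OF k(1)] by simp
  moreover have "0 \<le> m^2 + n * k * sin k" using nf k s0 by simp
  ultimately show ?thesis using m by simp
qed

lemma beta_m0:
  fixes k :: real
  assumes k: "0 \<le> k" "k < pi"
  shows "beta k 0 = 0"
proof -
  have n: "qca_n 0 = 1" by (simp add: qca_n_def)
  have om: "qca_omega k 0 = k" unfolding qca_omega_def n using k by (simp add: arccos_cos)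
  show ?thesis
  proof (cases "k = 0")
    case True
    then show ?thesis by (simp add: beta_def qca_v_def dirac_v_def om n)
  next
    case False
    then have kp: "0 < k" using k by simp
    have "sin k > 0" using kp k by (intro sin_gt_zero) auto
    then have v: "qca_v k 0 = 1" by (simp add: qca_v_def om n)
    have vd: "dirac_v k 0 = 1" using kp by (simp add: dirac_v_def)
    show ?thesis by (simp add: beta_def v vd)
  qed
qed

lemma beta_closed:
  fixes k m :: real
  assumes m: "0 < m" "m \<le> 1" and k: "0 \<le> k" "k < pi"
  shows "beta k m = (1 - 1 / sqrt (1 + (m * (k - qca_n m * sin k) / (m^2 + qca_n m * k * sin k))^2)) / 2"
proof -
  define n where "n = qca_n m"
  have nf: "0 \<le> n" "n \<le> 1" "n^2 = 1 - m^2" using n_facts[of m] m n_def by auto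
  have s0: "0 \<le> sin k" using k by (intro sin_ge_zero) auto
  have cb: "-1 \<le> n * cos k" "n * cos k \<le> 1" using ncos_bounds[OF nf(1,2), of k] by (simp_all add: abs_le_iff)
  define S where "S = sqrt (1 - (n * cos k)^2)"
  define R where "R = sqrt (k^2 + m^2)"
  define A where "A = m^2 + n * k * sin k"
  define B where "B = m * (k - n * sin k)"
  have S2': "1 - (n * cos k)^2 = m^2 + n^2 * (sin k)^2"
    using nf(3) sin_cos_squared_add[of k] by algebra
  have S2pos: "0 < 1 - (n * cos k)^2" unfolding S2' using m by (simp add: add_pos_nonneg)
  have Sp: "0 < S" using S2pos S_def by simp
  have S2: "S^2 = m^2 + n^2 * (sin k)^2" using S2pos S_def S2' by simp
  have Rp: "0 < R" using m R_def by (simp add: add_nonneg_pos)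
  have R2: "R^2 = k^2 + m^2" using R_def by simp
  have "0 < R^2" using Rp by simp
  have Ap: "0 < A" using m nf k s0 A_def by (simp add: add_pos_nonneg)
  have sinom: "sin (qca_omega k m) = S" unfolding qca_omega_def S_def n_def[symmetric]
    using cb by (simp add: sin_arccos)
  have v: "qca_v k m = n * sin k / S" unfolding qca_v_def sinom n_def ..
  have vd: "dirac_v k m = k / R" unfolding dirac_v_def R_def ..
  have eq: "(1 - (qca_v k m)^2) * (1 - (dirac_v k m)^2) = (m^2 / (S * R))^2"
  proof -
    have ne: "m^2 + n^2 * (sin k)^2 \<noteq> 0" using S2pos S2' by simp
    have "1 - (qca_v k m)^2 = m^2 / S^2" unfolding v using Sp S2 ne by (simp add: field_simps)
    moreover have "1 - (dirac_v k m)^2 = m^2 / R^2" unfolding vd power_divide using R2 \<open>0 < R\<^sup>2\<close> by (intro one_minus_frac) auto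
    ultimately have "(1 - (qca_v k m)^2) * (1 - (dirac_v k m)^2) = (m^2 / S^2) * (m^2 / R^2)" by simp
    also have "\<dots> = (m^2 / (S * R))^2" by (simp add: power_divide power_mult_distrib power2_eq_square)
    finally show ?thesis .
  qed
  have sq: "sqrt ((1 - (qca_v k m)^2) * (1 - (dirac_v k m)^2)) = m^2 / (S * R)"
    unfolding eq real_sqrt_abs using Sp Rp by simp
  have "beta k m = (1 - A / (S * R)) / 2"
    unfolding beta_def sq unfolding v vd A_def using Sp Rp by (simp add: field_simps)
  also have "S * R = sqrt (A^2 + B^2)"
  proof -
    have "(S * R)^2 = A^2 + B^2" unfolding power_mult_distrib S2 R2 A_def B_def
      using nf(3) by algebra
    then show ?thesis using Sp Rp by (metis less_eq_real_def mult_nonneg_nonneg real_sqrt_unique)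
  qed
  also have "sqrt (A^2 + B^2) = A * sqrt (1 + (B / A)^2)"
  proof -
    have "A^2 + B^2 = A^2 * (1 + (B / A)^2)" using Ap by (simp add: field_simps)
    then show ?thesis using Ap by (simp add: real_sqrt_mult)
  qed
  also have "A / (A * sqrt (1 + (B / A)^2)) = 1 / sqrt (1 + (B / A)^2)" using Ap by simp
  finally show ?thesis unfolding A_def B_def n_def .
qed

lemma beta_mono:
  fixes a b m :: real
  assumes m: "0 \<le> m" "m \<le> 1" and ab: "0 \<le> a" "a \<le> b" "b < pi"
  shows "beta a m \<le> beta b m"
proof (cases "m = 0")
  case True
  then show ?thesis using beta_m0 ab by simp
next
  case False
  then have mp: "0 < m" using m by simp
  define n where "n = qca_n m"
  have nf: "0 \<le> n" "n \<le> 1" "n^2 = 1 - m^2" using n_facts[OF m] n_def by auto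
  define h where "h = (\<lambda>k. m * (k - n * sin k) / (m^2 + n * k * sin k))"
  have ha: "0 \<le> h a" unfolding h_def using h_nonneg[OF mp nf(1,2)] ab by simp
  have hab: "h a \<le> h b" unfolding h_def using h_mono[OF mp nf ab] .
  have "(h a)^2 \<le> (h b)^2" using ha hab by (intro power_mono) auto
  then have "sqrt (1 + (h a)^2) \<le> sqrt (1 + (h b)^2)" by simp
  moreover have "0 < sqrt (1 + (h a)^2)" by (simp add: add_pos_nonneg)
  ultimately have "1 / sqrt (1 + (h b)^2) \<le> 1 / sqrt (1 + (h a)^2)"
    by (intro divide_left_mono) auto
  then show ?thesis
    using beta_closed[OF mp m(2), of a] beta_closed[OF mp m(2), of b] ab
    unfolding h_def n_def by simp
qed


lemma sup_even_mono:
  fixes f :: "real \<Rightarrow> real" and kb :: real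
  assumes kb: "0 \<le> kb" and ev: "\<And>k. f (-k) = f k"
    and mono: "\<And>k. 0 \<le> k \<Longrightarrow> k \<le> kb \<Longrightarrow> f 0 \<le> f k \<and> f k \<le> f kb"
  shows "(SUP k\<in>{-kb..kb}. \<bar>f k\<bar>) = max \<bar>f 0\<bar> \<bar>f kb\<bar>"
proof (rule cSup_eq_maximum)
  show "max \<bar>f 0\<bar> \<bar>f kb\<bar> \<in> (\<lambda>k. \<bar>f k\<bar>) ` {-kb..kb}"
    using kb by (cases "\<bar>f 0\<bar> \<le> \<bar>f kb\<bar>") (auto simp: max_def)
next
  fix y assume "y \<in> (\<lambda>k. \<bar>f k\<bar>) ` {-kb..kb}"
  then obtain k where k: "-kb \<le> k" "k \<le> kb" and y: "y = \<bar>f k\<bar>" by auto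
  have "f k = f \<bar>k\<bar>" using ev[of k] by (cases "0 \<le> k") auto
  moreover have "f 0 \<le> f \<bar>k\<bar> \<and> f \<bar>k\<bar> \<le> f kb" using mono[of "\<bar>k\<bar>"] k by simp
  ultimately show "y \<le> max \<bar>f 0\<bar> \<bar>f kb\<bar>" using y by (simp add: max_def abs_if split: if_splits)
qed

lemma alpha_even: "alpha (-k) m = alpha k m"
  by (simp add: alpha_def dirac_omega_def qca_omega_def)

lemma beta_even: "beta (-k) m = beta k m"
proof -
  have "qca_v (-k) m = - qca_v k m" by (simp add: qca_v_def qca_omega_def)
  moreover have "dirac_v (-k) m = - dirac_v k m" by (simp add: dirac_v_def)
  ultimately show ?thesis by (simp add: beta_def)
qed

theorem lemma2:
  fixes kb m :: real
  assumes "0 \<le> kb" and "kb < pi" and "0 \<le> m" and "m \<le> 1"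
  shows "(SUP k\<in>{-kb..kb}. \<bar>alpha k m\<bar>) = max \<bar>alpha 0 m\<bar> \<bar>alpha kb m\<bar>
     \<and> (SUP k\<in>{-kb..kb}. \<bar>beta k m\<bar>) = max \<bar>beta 0 m\<bar> \<bar>beta kb m\<bar>"
proof
  show "(SUP k\<in>{-kb..kb}. \<bar>alpha k m\<bar>) = max \<bar>alpha 0 m\<bar> \<bar>alpha kb m\<bar>"
    using sup_even_mono[of kb "\<lambda>k. alpha k m"] alpha_even alpha_mono assms by force
  show "(SUP k\<in>{-kb..kb}. \<bar>beta k m\<bar>) = max \<bar>beta 0 m\<bar> \<bar>beta kb m\<bar>"
    using sup_even_mono[of kb "\<lambda>k. beta k m"] beta_even beta_mono assms by force
qed

end
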